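(* Let $S,T$ be measurement scenarios and let $G_{S,T}$ be the set of global assignments $t\in\mathcal E_{[S,T]}(X_T)$ such that $\delta_t$ satisfies $g_{S,T}$. Then probabilistic procedures $S\to T$ correspond bijectively to probability distributions on $G_{S,T}$, via $\sum_ir_if_i\mapsto\sum_ir_i\delta_{t_{f_i}}$ where $t_f=((\pi_f(x),\alpha_{f,x}))_{x\in X_T}$. Moreover, the empirical models $\sum_ir_i\delta_{t_{f_i}}$ on $[S,T]$ arising from probabilistic procedures are exactly the non-contextual empirical models on $[S,T]$ that satisfy $g_{S,T}$.
   Context: A simplicial complex $\Sigma$ on a finite set $X$ is a family of subsets containing $\emptyset$ and all singletons, closed under subsets. A measurement scenario $S=(X_S,O_S,\Sigma_S)$: finite set $X_S$, finite non-empty outcome sets $O_{S,x}$, simplicial complex $\Sigma_S$ of contexts. $\mathcal E_S(U)=\prod_{x\in U}O_{S,x}$, restriction $s|_V$. An empirical model on $S$ is a family $(e_\sigma)_{\sigma\in\Sigma_S}$ of probability distributions on $\mathcal E_S(\sigma)$ compatible under marginalisation; $\delta_t$ is the model with $(\delta_t)_\sigma$ the point mass at $t|_\sigma$; a model is non-contextual if it is a convex combination of deterministic models $\delta_t$. A simplicial relation from $\Sigma$ (on $X$) to $\Delta$ (on $Y$) is a relation $R\subseteq X\times Y$ with $R(\sigma)\in\Delta$ for all $\sigma\in\Sigma$. A deterministic procedure $f\colon S\to T$ is a pair $(\pi_f,\alpha_f)$: $\pi_f$ a simplicial relation from $\Sigma_T$ to $\Sigma_S$ and $\alpha_{f,x}\colon\mathcal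 E_S(\pi_f(x))\to O_{T,x}$ for $x\in X_T$. A probabilistic procedure $S\to T$ is a finitely supported probability distribution on deterministic procedures $S\to T$, written $\sum_ir_if_i$. The scenario $[S,T]$ has $X_{[S,T]}=X_T$, $\Sigma_{[S,T]}=\Sigma_T$, $O_{[S,T],x}=\{(U,\beta):U\subseteq X_S,\ \beta\colon\mathcal E_S(U)\to O_{T,x}\}$. A model $e$ on $[S,T]$ satisfies $g_{S,T}$ iff for every $\sigma\in\Sigma_T$ and every $((U_x,\beta_x))_{x\in\sigma}$ in the support of $e_\sigma$, $\bigcup_{x\in\sigma}U_x\in\Sigma_S$. *)

theory Defs
  imports "HOL-Library.FuncSet" "HOL-Probability.Probability_Mass_Function"
begin

text \<open>Measurement scenarios: measurements of type 'm, outcomes of type 'v.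
  Assignments are extensional functions (undefined outside their domain).\<close>

record ('m, 'v) scenario =
  meas :: "'m set"
  outs :: "'m \<Rightarrow> 'v set"
  ctxs :: "'m set set"

definition simplicial_complex :: "'a set \<Rightarrow> 'a set set \<Rightarrow> bool" where
  "simplicial_complex X K \<longleftrightarrow> K \<subseteq> Pow X \<and> {} \<in> K \<and> (\<forall>x\<in>X. {x} \<in> K)
     \<and> (\<forall>\<sigma>\<in>K. \<forall>\<tau>. \<tau> \<subseteq> \<sigma> \<longrightarrow> \<tau> \<in> K)"

definition scenario :: "('m, 'v) scenario \<Rightarrow> bool" where
  "scenario S \<longleftrightarrow> finite (meas S) \<and> (\<forall>x\<in>meas S. finite (outs S x) \<and> outs S x \<noteq> {})
     \<and> simplicial_complex (meas S) (ctxs S)"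

definition assignments :: "('m, 'v) scenario \<Rightarrow> 'm set \<Rightarrow> ('m \<Rightarrow> 'v) set" where
  "assignments S U = PiE U (outs S)"

definition empirical_model :: "('m, 'v) scenario \<Rightarrow> ('m set \<Rightarrow> ('m \<Rightarrow> 'v) pmf) \<Rightarrow> bool" where
  "empirical_model S e \<longleftrightarrow>
     (\<forall>\<sigma>\<in>ctxs S. set_pmf (e \<sigma>) \<subseteq> assignments S \<sigma>) \<and>
     (\<forall>\<sigma>\<in>ctxs S. \<forall>\<tau>\<in>ctxs S. \<tau> \<subseteq> \<sigma> \<longrightarrow> map_pmf (\<lambda>s. restrict s \<tau>) (e \<sigma>) = e \<tau>)"

definition det_model :: "('m \<Rightarrow> 'v) \<Rightarrow> ('m set \<Rightarrow> ('m \<Rightarrow> 'v) pmf)" where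
  "det_model t = (\<lambda>\<sigma>. return_pmf (restrict t \<sigma>))"

text \<open>The convex combination sum_i r_i delta_{t_i}, given by the finitely supported
  distribution d = sum_i r_i [t_i] on global assignments.\<close>
definition model_of :: "('m \<Rightarrow> 'v) pmf \<Rightarrow> ('m set \<Rightarrow> ('m \<Rightarrow> 'v) pmf)" where
  "model_of d = (\<lambda>\<sigma>. map_pmf (\<lambda>t. restrict t \<sigma>) d)"

definition noncontextual :: "('m, 'v) scenario \<Rightarrow> ('m set \<Rightarrow> ('m \<Rightarrow> 'v) pmf) \<Rightarrow> bool" where
  "noncontextual S e \<longleftrightarrow> (\<exists>d. finite (set_pmf d) \<and> set_pmf d \<subseteq> assignments S (meas S)
      \<and> (\<forall>\<sigma>\<in>ctxs S. e \<sigma> = model_of d \<sigma>))"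

text \<open>Simplicial relation from (X_T, Sigma_T) to (X_S, Sigma_S), given as
  pi : X_T -> Pow X_S (the relation R = {(x,y). y \<in> pi x}); R(sigma) = Union of pi over sigma.\<close>
definition simplicial_relation ::
    "'y set \<Rightarrow> 'y set set \<Rightarrow> 'x set \<Rightarrow> 'x set set \<Rightarrow> ('y \<Rightarrow> 'x set) \<Rightarrow> bool" where
  "simplicial_relation X K Y L \<pi> \<longleftrightarrow>
     \<pi> \<in> X \<rightarrow>\<^sub>E Pow Y \<and> (\<forall>\<sigma>\<in>K. (\<Union>x\<in>\<sigma>. \<pi> x) \<in> L)"

definition det_procs :: "('x, 'o) scenario \<Rightarrow> ('y, 'p) scenario
    \<Rightarrow> (('y \<Rightarrow> 'x set) \<times> ('y \<Rightarrow> ('x \<Rightarrow> 'o) \<Rightarrow> 'p)) set" where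
  "det_procs S T = {(\<pi>, \<alpha>).
      simplicial_relation (meas T) (ctxs T) (meas S) (ctxs S) \<pi> \<and>
      \<alpha> \<in> (\<Pi>\<^sub>E x\<in>meas T. assignments S (\<pi> x) \<rightarrow>\<^sub>E outs T x)}"

definition prob_procs :: "('x, 'o) scenario \<Rightarrow> ('y, 'p) scenario
    \<Rightarrow> (('y \<Rightarrow> 'x set) \<times> ('y \<Rightarrow> ('x \<Rightarrow> 'o) \<Rightarrow> 'p)) pmf set" where
  "prob_procs S T = {P. finite (set_pmf P) \<and> set_pmf P \<subseteq> det_procs S T}"

definition fun_scen :: "('x, 'o) scenario \<Rightarrow> ('y, 'p) scenario
    \<Rightarrow> ('y, 'x set \<times> (('x \<Rightarrow> 'o) \<Rightarrow> 'p)) scenario" where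
  "fun_scen S T = \<lparr> meas = meas T,
      outs = (\<lambda>x. {(U, \<beta>). U \<subseteq> meas S \<and> \<beta> \<in> assignments S U \<rightarrow>\<^sub>E outs T x}),
      ctxs = ctxs T \<rparr>"

definition satisfies_g :: "('x, 'o) scenario \<Rightarrow> ('y, 'p) scenario
    \<Rightarrow> ('y set \<Rightarrow> ('y \<Rightarrow> 'x set \<times> (('x \<Rightarrow> 'o) \<Rightarrow> 'p)) pmf) \<Rightarrow> bool" where
  "satisfies_g S T e \<longleftrightarrow>
     (\<forall>\<sigma>\<in>ctxs T. \<forall>t\<in>set_pmf (e \<sigma>). (\<Union>x\<in>\<sigma>. fst (t x)) \<in> ctxs S)"

definition G :: "('x, 'o) scenario \<Rightarrow> ('y, 'p) scenario
    \<Rightarrow> ('y \<Rightarrow> 'x set \<times> (('x \<Rightarrow> 'o) \<Rightarrow> 'p)) set" where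
  "G S T = {t \<in> assignments (fun_scen S T) (meas T). satisfies_g S T (det_model t)}"

definition t_of :: "('y, 'p) scenario \<Rightarrow> ('y \<Rightarrow> 'x set) \<times> ('y \<Rightarrow> ('x \<Rightarrow> 'o) \<Rightarrow> 'p)
    \<Rightarrow> ('y \<Rightarrow> 'x set \<times> (('x \<Rightarrow> 'o) \<Rightarrow> 'p))" where
  "t_of T f = (\<lambda>x\<in>meas T. (fst f x, snd f x))"

end

theory Submission
  imports Defs
begin

definition inv_t :: "('y, 'p) scenario \<Rightarrow> ('y \<Rightarrow> 'x set \<times> (('x \<Rightarrow> 'o) \<Rightarrow> 'p))
   \<Rightarrow> ('y \<Rightarrow> 'x set) \<times> ('y \<Rightarrow> ('x \<Rightarrow> 'o) \<Rightarrow> 'p)" where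
  "inv_t T t = ((\<lambda>x\<in>meas T. fst (t x)), (\<lambda>x\<in>meas T. snd (t x)))"

lemma union_restrict: "(\<Union>x\<in>\<sigma>. fst (restrict t \<sigma> x)) = (\<Union>x\<in>\<sigma>. fst (t x))"
  by auto

lemma G_iff: "t \<in> G S T \<longleftrightarrow> t \<in> assignments (fun_scen S T) (meas T) \<and>
   (\<forall>\<sigma>\<in>ctxs T. (\<Union>x\<in>\<sigma>. fst (t x)) \<in> ctxs S)"
  unfolding G_def satisfies_g_def det_model_def by (auto simp: union_restrict)

lemma inv_t_t_of: "f \<in> det_procs S T \<Longrightarrow> inv_t T (t_of T f) = f"
  unfolding det_procs_def simplicial_relation_def inv_t_def t_of_def
  by (cases f) (auto simp: PiE_def extensional_def fun_eq_iff)

lemma t_of_inv_t: "t \<in> G S T \<Longrightarrow> t_of T (inv_t T t) = t"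
  unfolding G_iff assignments_def inv_t_def t_of_def fun_scen_def
  by (auto simp: PiE_def extensional_def fun_eq_iff)

lemma subctx: "scenario T \<Longrightarrow> \<sigma> \<in> ctxs T \<Longrightarrow> \<sigma> \<subseteq> meas T"
  unfolding scenario_def simplicial_complex_def by auto

lemma t_of_G: "scenario T \<Longrightarrow> f \<in> det_procs S T \<Longrightarrow> t_of T f \<in> G S T"
proof -
  assume T: "scenario T" and f: "f \<in> det_procs S T"
  obtain \<pi> \<alpha> where fe: "f = (\<pi>, \<alpha>)" by (cases f)
  have sr: "simplicial_relation (meas T) (ctxs T) (meas S) (ctxs S) \<pi>"
    and al: "\<alpha> \<in> (\<Pi>\<^sub>E x\<in>meas T. assignments S (\<pi> x) \<rightarrow>\<^sub>E outs T x)"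
    using f fe unfolding det_procs_def by auto
  have "t_of T f \<in> assignments (fun_scen S T) (meas T)"
    using sr al unfolding assignments_def fun_scen_def t_of_def fe simplicial_relation_def
    by (auto simp: PiE_iff Pi_iff)
  moreover have "\<forall>\<sigma>\<in>ctxs T. (\<Union>x\<in>\<sigma>. fst (t_of T f x)) \<in> ctxs S"
  proof
    fix \<sigma> assume s: "\<sigma> \<in> ctxs T"
    have "(\<Union>x\<in>\<sigma>. fst (t_of T f x)) = (\<Union>x\<in>\<sigma>. \<pi> x)"
      using subctx[OF T s] unfolding t_of_def fe by (intro SUP_cong) auto
    thus "(\<Union>x\<in>\<sigma>. fst (t_of T f x)) \<in> ctxs S" using sr s unfolding simplicial_relation_def by auto
  qed
  ultimately show ?thesis unfolding G_iff by blast
qed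

lemma inv_t_G: "scenario T \<Longrightarrow> t \<in> G S T \<Longrightarrow> inv_t T t \<in> det_procs S T"
proof -
  assume T: "scenario T" and t: "t \<in> G S T"
  have A: "t \<in> assignments (fun_scen S T) (meas T)"
    and B: "\<forall>\<sigma>\<in>ctxs T. (\<Union>x\<in>\<sigma>. fst (t x)) \<in> ctxs S" using t unfolding G_iff by auto
  have "simplicial_relation (meas T) (ctxs T) (meas S) (ctxs S) (\<lambda>x\<in>meas T. fst (t x))"
    unfolding simplicial_relation_def
  proof
    show "(\<lambda>x\<in>meas T. fst (t x)) \<in> meas T \<rightarrow>\<^sub>E Pow (meas S)"
    proof (rule PiE_I)
      fix x assume x: "x \<in> meas T"
      hence "t x \<in> outs (fun_scen S T) x" using A unfolding assignments_def by auto
      thus "(\<lambda>x\<in>meas T. fst (t x)) x \<in> Pow (meas S)" using x unfolding fun_scen_def by auto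
    qed auto
    show "\<forall>\<sigma>\<in>ctxs T. (\<Union>x\<in>\<sigma>. (\<lambda>x\<in>meas T. fst (t x)) x) \<in> ctxs S"
    proof
      fix \<sigma> assume s: "\<sigma> \<in> ctxs T"
      have "(\<Union>x\<in>\<sigma>. (\<lambda>x\<in>meas T. fst (t x)) x) = (\<Union>x\<in>\<sigma>. fst (t x))"
        using subctx[OF T s] by auto
      thus "(\<Union>x\<in>\<sigma>. (\<lambda>x\<in>meas T. fst (t x)) x) \<in> ctxs S" using B s by auto
    qed
  qed
  moreover have "(\<lambda>x\<in>meas T. snd (t x)) \<in> (\<Pi>\<^sub>E x\<in>meas T. assignments S ((\<lambda>x\<in>meas T. fst (t x)) x) \<rightarrow>\<^sub>E outs T x)"
  proof (rule PiE_I)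
    fix x assume x: "x \<in> meas T"
    hence "t x \<in> outs (fun_scen S T) x" using A unfolding assignments_def by auto
    then obtain U \<beta> where "t x = (U, \<beta>)" "\<beta> \<in> assignments S U \<rightarrow>\<^sub>E outs T x"
      unfolding fun_scen_def by auto
    thus "(\<lambda>x\<in>meas T. snd (t x)) x \<in> assignments S ((\<lambda>x\<in>meas T. fst (t x)) x) \<rightarrow>\<^sub>E outs T x"
      using x by simp
  qed auto
  ultimately show ?thesis unfolding det_procs_def inv_t_def by auto
qed

lemma G_finite:
  assumes S: "scenario S" and T: "scenario T" shows "finite (G S T)"
proof -
  have fS: "finite (meas S)" and fT: "finite (meas T)"
    and oS: "\<forall>x\<in>meas S. finite (outs S x)" and oT: "\<forall>x\<in>meas T. finite (outs T x)"
    using S T unfolding scenario_def by auto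
  have "\<forall>x\<in>meas T. finite (outs (fun_scen S T) x)"
  proof
    fix x assume x: "x \<in> meas T"
    have "outs (fun_scen S T) x \<subseteq> (SIGMA U:Pow (meas S). assignments S U \<rightarrow>\<^sub>E outs T x)"
      unfolding fun_scen_def by auto
    moreover have "finite (SIGMA U:Pow (meas S). assignments S U \<rightarrow>\<^sub>E outs T x)"
    proof (rule finite_SigmaI)
      show "finite (Pow (meas S))" using fS by simp
      fix U assume "U \<in> Pow (meas S)"
      hence "finite (assignments S U)" unfolding assignments_def
        using fS oS by (intro finite_PiE) (auto intro: finite_subset)
      thus "finite (assignments S U \<rightarrow>\<^sub>E outs T x)" using oT x by (intro finite_PiE) auto
    qed
    ultimately show "finite (outs (fun_scen S T) x)" by (rule finite_subset)
  qed
  hence "finite (assignments (fun_scen S T) (meas T))"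
    unfolding assignments_def using fT by (intro finite_PiE) auto
  thus ?thesis unfolding G_def by auto
qed

lemma restrict_PiE_sub: "t \<in> PiE A B \<Longrightarrow> \<sigma> \<subseteq> A \<Longrightarrow> restrict t \<sigma> \<in> PiE \<sigma> B"
  by (auto simp: PiE_iff)

lemma model_emp:
  assumes T: "scenario T" and d: "set_pmf d \<subseteq> assignments (fun_scen S T) (meas T)"
  shows "empirical_model (fun_scen S T) (model_of d)"
  unfolding empirical_model_def
proof
  show "\<forall>\<sigma>\<in>ctxs (fun_scen S T). set_pmf (model_of d \<sigma>) \<subseteq> assignments (fun_scen S T) \<sigma>"
  proof
    fix \<sigma> assume "\<sigma> \<in> ctxs (fun_scen S T)"
    hence "\<sigma> \<subseteq> meas T" using subctx[OF T] unfolding fun_scen_def by auto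
    show "set_pmf (model_of d \<sigma>) \<subseteq> assignments (fun_scen S T) \<sigma>"
    proof
      fix s assume "s \<in> set_pmf (model_of d \<sigma>)"
      then obtain t where t: "t \<in> set_pmf d" and st: "s = restrict t \<sigma>" unfolding model_of_def by auto
      have "t \<in> PiE (meas T) (outs (fun_scen S T))" using t d unfolding assignments_def by auto
      thus "s \<in> assignments (fun_scen S T) \<sigma>" unfolding st assignments_def
        using restrict_PiE_sub \<open>\<sigma> \<subseteq> meas T\<close> by blast
    qed
  qed
  show "\<forall>\<sigma>\<in>ctxs (fun_scen S T). \<forall>\<tau>\<in>ctxs (fun_scen S T). \<tau> \<subseteq> \<sigma> \<longrightarrow>
     map_pmf (\<lambda>s. restrict s \<tau>) (model_of d \<sigma>) = model_of d \<tau>"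
    unfolding model_of_def by (auto simp: map_pmf_comp Int_absorb1)
qed

lemma image_G:
  assumes T: "scenario T" and P: "P \<in> prob_procs S T"
  shows "set_pmf (map_pmf (t_of T) P) \<subseteq> G S T"
  using P t_of_G[OF T] unfolding prob_procs_def by auto

lemma surj_G:
  assumes T: "scenario T" and d: "set_pmf d \<subseteq> G S T" and fin: "finite (set_pmf d)"
  shows "map_pmf (inv_t T) d \<in> prob_procs S T \<and> map_pmf (t_of T) (map_pmf (inv_t T) d) = d"
proof
  show "map_pmf (inv_t T) d \<in> prob_procs S T"
    unfolding prob_procs_def using d fin by (auto intro!: inv_t_G[OF T])
  have "map_pmf (t_of T) (map_pmf (inv_t T) d) = map_pmf (\<lambda>t. t_of T (inv_t T t)) d"
    by (simp add: map_pmf_comp)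
  also have "\<dots> = map_pmf id d" using d t_of_inv_t by (intro map_pmf_cong) auto
  finally show "map_pmf (t_of T) (map_pmf (inv_t T) d) = d" by simp
qed

theorem mainTheorem9:
  fixes S :: "('x, 'o) scenario" and T :: "('y, 'p) scenario"
  assumes "scenario S" and "scenario T"
  shows "bij_betw (map_pmf (t_of T)) (prob_procs S T) {d. set_pmf d \<subseteq> G S T} \<and>
    (\<forall>P\<in>prob_procs S T. empirical_model (fun_scen S T) (model_of (map_pmf (t_of T) P))) \<and>
    (\<forall>e. empirical_model (fun_scen S T) e \<longrightarrow>
           ((\<exists>P\<in>prob_procs S T. \<forall>\<sigma>\<in>ctxs T. e \<sigma> = model_of (map_pmf (t_of T) P) \<sigma>)
            \<longleftrightarrow> noncontextual (fun_scen S T) e \<and> satisfies_g S T e))"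
proof (intro conjI allI impI)
  note S = assms(1) and T = assms(2)
  have GA: "G S T \<subseteq> assignments (fun_scen S T) (meas T)" unfolding G_def by auto
  show "bij_betw (map_pmf (t_of T)) (prob_procs S T) {d. set_pmf d \<subseteq> G S T}"
    unfolding bij_betw_def
  proof (intro conjI)
    show "inj_on (map_pmf (t_of T)) (prob_procs S T)"
    proof (rule inj_onI)
      fix P Q assume P: "P \<in> prob_procs S T" and Q: "Q \<in> prob_procs S T"
        and eq: "map_pmf (t_of T) P = map_pmf (t_of T) Q"
      have "\<And>P. P \<in> prob_procs S T \<Longrightarrow> map_pmf (inv_t T) (map_pmf (t_of T) P) = P"
      proof -
        fix P assume P: "P \<in> prob_procs S T"
        have "map_pmf (inv_t T) (map_pmf (t_of T) P) = map_pmf (\<lambda>f. inv_t T (t_of T f)) P"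
          by (simp add: map_pmf_comp)
        also have "\<dots> = map_pmf id P" using P inv_t_t_of[of _ S T] unfolding prob_procs_def
          by (intro map_pmf_cong) auto
        finally show "map_pmf (inv_t T) (map_pmf (t_of T) P) = P" by simp
      qed
      from this[OF P] this[OF Q] eq show "P = Q" by metis
    qed
    show "map_pmf (t_of T) ` prob_procs S T = {d. set_pmf d \<subseteq> G S T}"
    proof
      show "map_pmf (t_of T) ` prob_procs S T \<subseteq> {d. set_pmf d \<subseteq> G S T}"
        using image_G[OF T, of _ S] by blast
      show "{d. set_pmf d \<subseteq> G S T} \<subseteq> map_pmf (t_of T) ` prob_procs S T"
      proof
        fix d assume "d \<in> {d. set_pmf d \<subseteq> G S T}"
        hence d: "set_pmf d \<subseteq> G S T" by simp
        hence "finite (set_pmf d)" using G_finite[OF S T] finite_subset by blast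
        from surj_G[OF T d this] show "d \<in> map_pmf (t_of T) ` prob_procs S T"
          by (metis image_eqI)
      qed
    qed
  qed
  show "\<forall>P\<in>prob_procs S T. empirical_model (fun_scen S T) (model_of (map_pmf (t_of T) P))"
    using image_G[OF T, of _ S] GA model_emp[OF T] by blast
  fix e assume em: "empirical_model (fun_scen S T) e"
  show "(\<exists>P\<in>prob_procs S T. \<forall>\<sigma>\<in>ctxs T. e \<sigma> = model_of (map_pmf (t_of T) P) \<sigma>)
            \<longleftrightarrow> noncontextual (fun_scen S T) e \<and> satisfies_g S T e"
  proof
    assume "\<exists>P\<in>prob_procs S T. \<forall>\<sigma>\<in>ctxs T. e \<sigma> = model_of (map_pmf (t_of T) P) \<sigma>"
    then obtain P where P: "P \<in> prob_procs S T"
      and eP: "\<forall>\<sigma>\<in>ctxs T. e \<sigma> = model_of (map_pmf (t_of T) P) \<sigma>" by blast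
    have sd: "set_pmf (map_pmf (t_of T) P) \<subseteq> G S T" using image_G[OF T P] .
    have fin: "finite (set_pmf (map_pmf (t_of T) P))" using P unfolding prob_procs_def by simp
    show "noncontextual (fun_scen S T) e \<and> satisfies_g S T e"
    proof
      show "noncontextual (fun_scen S T) e" unfolding noncontextual_def
        using fin sd GA eP by (intro exI[of _ "map_pmf (t_of T) P"]) (auto simp: fun_scen_def)
      show "satisfies_g S T e" unfolding satisfies_g_def
      proof (intro ballI)
        fix \<sigma> t assume s: "\<sigma> \<in> ctxs T" and t: "t \<in> set_pmf (e \<sigma>)"
        then obtain u where u: "u \<in> G S T" and tu: "t = restrict u \<sigma>"
          using eP sd unfolding model_of_def by auto
        have "(\<Union>x\<in>\<sigma>. fst (t x)) = (\<Union>x\<in>\<sigma>. fst (u x))" using tu by auto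
        thus "(\<Union>x\<in>\<sigma>. fst (t x)) \<in> ctxs S" using u s unfolding G_iff by auto
      qed
    qed
  next
    assume "noncontextual (fun_scen S T) e \<and> satisfies_g S T e"
    then obtain d where fin: "finite (set_pmf d)"
      and dA: "set_pmf d \<subseteq> assignments (fun_scen S T) (meas T)"
      and ed: "\<forall>\<sigma>\<in>ctxs T. e \<sigma> = model_of d \<sigma>" and g: "satisfies_g S T e"
      unfolding noncontextual_def by (auto simp: fun_scen_def)
    have dG: "set_pmf d \<subseteq> G S T"
    proof
      fix u assume u: "u \<in> set_pmf d"
      have "\<forall>\<sigma>\<in>ctxs T. (\<Union>x\<in>\<sigma>. fst (u x)) \<in> ctxs S"
      proof
        fix \<sigma> assume s: "\<sigma> \<in> ctxs T"
        have "restrict u \<sigma> \<in> set_pmf (e \<sigma>)" using ed s u unfolding model_of_def by auto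
        hence "(\<Union>x\<in>\<sigma>. fst (restrict u \<sigma> x)) \<in> ctxs S" using g s unfolding satisfies_g_def by blast
        thus "(\<Union>x\<in>\<sigma>. fst (u x)) \<in> ctxs S" by (simp add: union_restrict)
      qed
      thus "u \<in> G S T" using u dA unfolding G_iff by auto
    qed
    from surj_G[OF T dG fin] show "\<exists>P\<in>prob_procs S T. \<forall>\<sigma>\<in>ctxs T. e \<sigma> = model_of (map_pmf (t_of T) P) \<sigma>"
      using ed by metis
  qed
qed

end
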